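(* Let $X\in\mathbf{R}$, $Y>0$, and let $f\colon(X,X+Y]\to\mathbf{R}$ be a real function. Let $d,H_1,\dots,H_d$ be natural numbers with $H_1+\cdots+H_d\le Y$. Then \[ \Bigl|\frac{1}{Y}\sum_{X<n\le X+Y}e(f(n))\Bigr|\le B\max\bigl(H_1^{-1/2},H_2^{-1/4},\dots,H_d^{-1/2^d},\,B^{-1/2^d}T_d^{1/2^d}\bigr), \] where $B=2+2\sqrt2$ and \[ T_d=\frac{1}{YH_1\cdots H_d}\sum_{\mathbf a}\Bigl|\sum_{n\in I(\mathbf a)}e(f_{\mathbf a}(n))\Bigr|, \] the outer sum running over all integer vectors $\mathbf a=(a_1,\dots,a_d)$ with $1\le a_r\le H_r-1$ for each $r$.
   Context: $e(x)=e^{2\pi i x}$; sums over $n$ are over integers. For real $a_1,\dots,a_h$ define inductively $f_{(a_1)}(x)=f(x+a_1)-f(x)$ and $f_{(a_1,\dots,a_h)}(x)=f_{(a_1,\dots,a_{h-1})}(x+a_h)-f_{(a_1,\dots,a_{h-1})}(x)$. For positive $a_j$, $f_{\mathbf a}$ is defined exactly on $I(\mathbf a)=(X,X+Y-\sum_j a_j]$ (possibly empty), and by convention $e(f_{\mathbf a}(x))=0$ when $f_{\mathbf a}(x)$ is undefined. *)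

theory Defs
  imports Complex_Main "HOL-Library.FuncSet"
begin

definition e :: "real \<Rightarrow> complex" where
  "e x = exp (2 * of_real pi * \<i> * of_real x)"

text \<open>Iterated differences: fdiff f a h is f_(a_1,...,a_h), with the shift
  vector a indexed from 1.  f_() = f, f_(a_1..a_h)(x) = f_(a_1..a_(h-1))(x+a_h) - f_(a_1..a_(h-1))(x).\<close>
fun fdiff :: "(real \<Rightarrow> real) \<Rightarrow> (nat \<Rightarrow> int) \<Rightarrow> nat \<Rightarrow> real \<Rightarrow> real" where
  "fdiff f a 0 x = f x"
| "fdiff f a (Suc h) x = fdiff f a h (x + of_int (a (Suc h))) - fdiff f a h x"

definition Iset :: "real \<Rightarrow> real \<Rightarrow> nat \<Rightarrow> (nat \<Rightarrow> int) \<Rightarrow> int set" where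
  "Iset X Y d a = {n::int. X < of_int n \<and> of_int n \<le> X + Y - of_int (\<Sum>j\<in>{1..d}. a j)}"

definition Bconst :: real where
  "Bconst = 2 + 2 * sqrt 2"

definition Td :: "(real \<Rightarrow> real) \<Rightarrow> real \<Rightarrow> real \<Rightarrow> nat \<Rightarrow> (nat \<Rightarrow> nat) \<Rightarrow> real" where
  "Td f X Y d H =
     (1 / (Y * (\<Prod>r\<in>{1..d}. real (H r)))) *
     (\<Sum>a\<in>Pi\<^sub>E {1..d} (\<lambda>r. {1..int (H r) - 1}).
        cmod (\<Sum>n\<in>Iset X Y d a. e (fdiff f a d (of_int n))))"

end

theory Submission
  imports Defs "HOL-Analysis.Analysis"
begin

lemma sum_supp_eq:
  assumes "finite A" "finite B" "C \<subseteq> A" "C \<subseteq> B" "\<And>n. n \<notin> C \<Longrightarrow> g n = 0"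
  shows "sum g A = sum g B"
proof -
  have "sum g A = sum g C" using assms by (intro sum.mono_neutral_right) auto
  also have "\<dots> = sum g B" using assms by (intro sum.mono_neutral_left) auto
  finally show ?thesis .
qed

lemma sum_shift_int:
  fixes g :: "int \<Rightarrow> 'b::comm_monoid_add"
  shows "(\<Sum>n\<in>{a<..b}. g (n + k)) = (\<Sum>n\<in>{a+k<..b+k}. g n)"
proof -
  have im: "(\<lambda>n. n + k) ` {a<..b} = {a+k<..b+k}"
    by (auto intro!: image_eqI[where x="_ - k"])
  have "(\<Sum>n\<in>{a+k<..b+k}. g n) = (\<Sum>n\<in>{a<..b}. g (n + k))"
    unfolding im[symmetric] by (subst sum.reindex) (auto simp: inj_on_def)
  thus ?thesis by simp
qed

lemma norm_sum_sq_le: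
  fixes w :: "'a \<Rightarrow> complex"
  assumes "finite M"
  shows "(cmod (sum w M))^2 \<le> real (card M) * (\<Sum>m\<in>M. (cmod (w m))^2)"
proof -
  have "cmod (sum w M) \<le> (\<Sum>m\<in>M. cmod (w m))" by (rule norm_sum)
  hence "(cmod (sum w M))^2 \<le> (\<Sum>m\<in>M. cmod (w m))^2"
    by (simp add: power_mono)
  also have "\<dots> \<le> (\<Sum>m\<in>M. (cmod (w m))^2) * card M"
    by (rule sum_squared_le_sum_of_squares)
  finally show ?thesis by (simp add: mult.commute)
qed

lemma vdc_int:
  fixes z :: "int \<Rightarrow> complex" and L U :: int and H :: nat
  assumes H1: "H \<ge> 1" and LU: "L \<le> U" and zb: "\<And>n. cmod (z n) \<le> 1"
    and zs: "\<And>n. n \<notin> {L<..U} \<Longrightarrow> z n = 0"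
  shows "(cmod (\<Sum>n\<in>{L<..U}. z n))^2 \<le> (real_of_int (U - L) + real H - 1) / real H *
     (real_of_int (U - L) + 2 * (\<Sum>k\<in>{1..int H - 1}. cmod (\<Sum>n\<in>{L<..U-k}. z (n+k) * cnj (z n))))"
proof -
  define S where "S = (\<Sum>n\<in>{L<..U}. z n)"
  define r where "r k = (\<Sum>n\<in>{L<..U}. z (n+k) * cnj (z n))" for k
  define M where "M = {L - int H + 1<..U}"
  define W where "W m = (\<Sum>h<H. z (m + int h))" for m
  have cardM: "real (card M) = real_of_int (U - L) + real H - 1"
    unfolding M_def using LU H1 by simp
  have 1: "(\<Sum>m\<in>M. W m) = of_nat H * S"
  proof -
    have "(\<Sum>m\<in>M. W m) = (\<Sum>h<H. \<Sum>m\<in>M. z (m + int h))"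
      unfolding W_def by (rule sum.swap)
    also have "\<dots> = (\<Sum>h<H. S)"
    proof (rule sum.cong[OF refl])
      fix h assume h: "h \<in> {..<H}"
      have "(\<Sum>m\<in>M. z (m + int h)) = (\<Sum>n\<in>{L - int H + 1 + int h<..U + int h}. z n)"
        unfolding M_def by (rule sum_shift_int)
      also have "\<dots> = S" unfolding S_def
        using h zs by (intro sum_supp_eq[where C="{L<..U}"]) auto
      finally show "(\<Sum>m\<in>M. z (m + int h)) = S" .
    qed
    finally show ?thesis by simp
  qed
  have 2: "(cmod (\<Sum>m\<in>M. W m))^2 \<le> card M * (\<Sum>m\<in>M. (cmod (W m))^2)"
    unfolding M_def by (rule norm_sum_sq_le) simp
  have 3: "complex_of_real (\<Sum>m\<in>M. (cmod (W m))^2) = (\<Sum>h<H. \<Sum>h'<H. r (int h - int h'))"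
  proof -
    have "complex_of_real (\<Sum>m\<in>M. (cmod (W m))^2) = (\<Sum>m\<in>M. W m * cnj (W m))"
      by (simp add: complex_norm_square del: of_real_power)
    also have "\<dots> = (\<Sum>m\<in>M. \<Sum>h<H. \<Sum>h'<H. z (m + int h) * cnj (z (m + int h')))"
      unfolding W_def by (simp add: sum_product)
    also have "\<dots> = (\<Sum>h<H. \<Sum>h'<H. \<Sum>m\<in>M. z (m + int h) * cnj (z (m + int h')))"
      by (subst sum.swap) (simp add: sum.swap[of _ M])
    also have "\<dots> = (\<Sum>h<H. \<Sum>h'<H. r (int h - int h'))"
    proof (intro sum.cong refl)
      fix h h' assume h: "h \<in> {..<H}" and h': "h' \<in> {..<H}"
      define g where "g n = z (n + (int h - int h')) * cnj (z n)" for n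
      have "(\<Sum>m\<in>M. z (m + int h) * cnj (z (m + int h'))) = (\<Sum>m\<in>M. g (m + int h'))"
        unfolding g_def by (simp add: algebra_simps)
      also have "\<dots> = (\<Sum>n\<in>{L - int H + 1 + int h'<..U + int h'}. g n)"
        unfolding M_def by (rule sum_shift_int)
      also have "\<dots> = (\<Sum>n\<in>{L<..U}. g n)"
        using h' zs by (intro sum_supp_eq[where C="{L<..U}"]) (auto simp: g_def)
      finally show "(\<Sum>m\<in>M. z (m + int h) * cnj (z (m + int h'))) = r (int h - int h')"
        unfolding r_def g_def by simp
    qed
    finally show ?thesis .
  qed
  have 4: "(\<Sum>m\<in>M. (cmod (W m))^2) \<le> (\<Sum>h<H. \<Sum>h'<H. cmod (r (int h - int h')))"
  proof -
    have "(\<Sum>m\<in>M. (cmod (W m))^2) = cmod (complex_of_real (\<Sum>m\<in>M. (cmod (W m))^2))"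
      by (simp only: norm_of_real) (simp add: sum_nonneg)
    also have "\<dots> = cmod (\<Sum>h<H. \<Sum>h'<H. r (int h - int h'))" using 3 by simp
    also have "\<dots> \<le> (\<Sum>h<H. cmod (\<Sum>h'<H. r (int h - int h')))" by (rule norm_sum)
    also have "\<dots> \<le> (\<Sum>h<H. \<Sum>h'<H. cmod (r (int h - int h')))"
      by (intro sum_mono norm_sum)
    finally show ?thesis .
  qed
  have 5: "(\<Sum>h<H. \<Sum>h'<H. cmod (r (int h - int h'))) \<le> H * (\<Sum>k\<in>{-int H<..<int H}. cmod (r k))"
  proof -
    have "(\<Sum>h<H. \<Sum>h'<H. cmod (r (int h - int h'))) = (\<Sum>h'<H. \<Sum>h<H. cmod (r (int h - int h')))"
      by (rule sum.swap)
    also have "\<dots> \<le> (\<Sum>h'<H. (\<Sum>k\<in>{-int H<..<int H}. cmod (r k)))"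
    proof (rule sum_mono)
      fix h' assume h': "h' \<in> {..<H}"
      have "(\<Sum>h<H. cmod (r (int h - int h'))) = (\<Sum>k\<in>(\<lambda>h. int h - int h') ` {..<H}. cmod (r k))"
        by (subst sum.reindex) (auto simp: inj_on_def)
      also have "\<dots> \<le> (\<Sum>k\<in>{-int H<..<int H}. cmod (r k))"
        using h' by (intro sum_mono2) auto
      finally show "(\<Sum>h<H. cmod (r (int h - int h'))) \<le> (\<Sum>k\<in>{-int H<..<int H}. cmod (r k))" .
    qed
    also have "\<dots> = H * (\<Sum>k\<in>{-int H<..<int H}. cmod (r k))" by simp
    finally show ?thesis .
  qed
  have 7: "cmod (r (-k)) = cmod (r k)" for k
  proof -
    define g where "g m = z m * cnj (z (m + k))" for m
    have "r (-k) = (\<Sum>n\<in>{L<..U}. g (n + -k))" unfolding r_def g_def by simp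
    also have "\<dots> = (\<Sum>n\<in>{L + -k<..U + -k}. g n)" by (rule sum_shift_int)
    also have "\<dots> = (\<Sum>n\<in>{L<..U}. g n)"
      using zs by (intro sum_supp_eq[where C="{L<..U} \<inter> {L-k<..U-k}"]) (auto simp: g_def)
    also have "\<dots> = cnj (r k)" unfolding r_def g_def by (simp add: mult.commute)
    finally show ?thesis by simp
  qed
  have 6: "(\<Sum>k\<in>{-int H<..<int H}. cmod (r k)) = cmod (r 0) + 2 * (\<Sum>k\<in>{1..int H - 1}. cmod (r k))"
  proof -
    have split: "{-int H<..<int H} = uminus ` {1..int H - 1} \<union> ({0} \<union> {1..int H - 1})"
      using H1 by (auto intro!: image_eqI[where x="- _"])
    have "(\<Sum>k\<in>{-int H<..<int H}. cmod (r k)) =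
        (\<Sum>k\<in>uminus ` {1..int H - 1}. cmod (r k)) + (\<Sum>k\<in>{0} \<union> {1..int H - 1}. cmod (r k))"
      unfolding split by (rule sum.union_disjoint) auto
    also have "(\<Sum>k\<in>uminus ` {1..int H - 1}. cmod (r k)) = (\<Sum>k\<in>{1..int H - 1}. cmod (r k))"
      by (subst sum.reindex) (auto simp: inj_on_def 7)
    also have "(\<Sum>k\<in>{0} \<union> {1..int H - 1}. cmod (r k)) = cmod (r 0) + (\<Sum>k\<in>{1..int H - 1}. cmod (r k))"
      by (subst sum.union_disjoint) auto
    finally show ?thesis by simp
  qed
  have 8: "cmod (r 0) \<le> real_of_int (U - L)"
  proof -
    have "cmod (r 0) \<le> (\<Sum>n\<in>{L<..U}. cmod (z n * cnj (z n)))" unfolding r_def by simp (rule norm_sum)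
    also have "\<dots> \<le> (\<Sum>n\<in>{L<..U}. 1)"
    proof (rule sum_mono)
      fix n show "cmod (z n * cnj (z n)) \<le> 1"
        using zb[of n] by (simp add: norm_mult mult_le_one)
    qed
    also have "\<dots> = real_of_int (U - L)" using LU by simp
    finally show ?thesis .
  qed
  have 9: "r k = (\<Sum>n\<in>{L<..U-k}. z (n+k) * cnj (z n))" if k: "k \<ge> 1" for k
    unfolding r_def using k zs by (intro sum_supp_eq[where C="{L<..U-k}"]) auto
  have Hpos: "real H > 0" using H1 by simp
  define T where "T = (\<Sum>k\<in>{1..int H - 1}. cmod (\<Sum>n\<in>{L<..U-k}. z (n+k) * cnj (z n)))"
  have T: "(\<Sum>k\<in>{1..int H - 1}. cmod (r k)) = T" unfolding T_def by (intro sum.cong refl) (simp add: 9)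
  have "(real H)^2 * (cmod S)^2 = (cmod (\<Sum>m\<in>M. W m))^2"
    by (simp add: 1 norm_mult power_mult_distrib)
  also have "\<dots> \<le> card M * (\<Sum>m\<in>M. (cmod (W m))^2)" by (rule 2)
  also have "\<dots> \<le> card M * (H * (cmod (r 0) + 2 * T))"
    using 4 5 6 T by (intro mult_left_mono) auto
  also have "\<dots> \<le> card M * (H * (real_of_int (U - L) + 2 * T))"
    using 8 Hpos by (intro mult_left_mono) auto
  finally have "(real H)^2 * (cmod S)^2 \<le> real (card M) * (H * (real_of_int (U - L) + 2 * T))" .
  hence "real H * (real H * (cmod S)^2) \<le> real H * (real (card M) * (real_of_int (U - L) + 2 * T))"
    by (simp add: power2_eq_square algebra_simps)
  hence "real H * (cmod S)^2 \<le> real (card M) * (real_of_int (U - L) + 2 * T)"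
    using Hpos by (rule mult_left_le_imp_le)
  hence "(cmod S)^2 \<le> real (card M) * (real_of_int (U - L) + 2 * T) / H"
    using Hpos by (simp add: pos_le_divide_eq mult.commute)
  thus ?thesis unfolding cardM S_def T_def by (simp add: field_simps)
qed


lemma norm_e: "cmod (e x) = 1"
proof -
  have "e x = exp (\<i> * complex_of_real (2 * pi * x))" unfolding e_def by (simp add: algebra_simps)
  thus ?thesis by simp
qed

lemma e_mult_cnj: "e a * cnj (e b) = e (a - b)"
  unfolding e_def by (simp add: exp_cnj exp_add[symmetric] algebra_simps)

lemma int_set_floor:
  fixes X' Z :: real
  shows "{n::int. X' < of_int n \<and> of_int n \<le> Z} = {\<lfloor>X'\<rfloor><..\<lfloor>Z\<rfloor>}"
  by (auto simp: floor_less_iff le_floor_iff)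

lemma vdc_real:
  fixes g :: "real \<Rightarrow> real" and X' Y' :: real and H :: nat
  assumes H1: "H \<ge> 1" and HY: "real H \<le> Y'"
  shows "(cmod (\<Sum>n\<in>{n::int. X' < of_int n \<and> of_int n \<le> X' + Y'}. e (g (of_int n))))^2
     \<le> 4 * Y'^2 / H + 4 * Y' / H * (\<Sum>k\<in>{1..int H - 1}.
        cmod (\<Sum>n\<in>{n::int. X' < of_int n \<and> of_int n \<le> X' + Y' - of_int k}.
           e (g (of_int n + of_int k) - g (of_int n))))"
proof -
  define L where "L = \<lfloor>X'\<rfloor>"
  define U where "U = \<lfloor>X' + Y'\<rfloor>"
  define z where "z n = (if n \<in> {L<..U} then e (g (of_int n)) else 0)" for n
  have LU: "L \<le> U" unfolding L_def U_def using HY by (intro floor_mono) simp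
  have zb: "cmod (z n) \<le> 1" for n unfolding z_def by (simp add: norm_e)
  have zs: "n \<notin> {L<..U} \<Longrightarrow> z n = 0" for n unfolding z_def by auto
  note V = vdc_int[of H L U z, OF H1 LU zb zs]
  have eqS: "(\<Sum>n\<in>{n::int. X' < of_int n \<and> of_int n \<le> X' + Y'}. e (g (of_int n))) = (\<Sum>n\<in>{L<..U}. z n)"
    unfolding int_set_floor L_def[symmetric] U_def[symmetric] z_def by simp
  define T where "T = (\<Sum>k\<in>{1..int H - 1}.
        cmod (\<Sum>n\<in>{n::int. X' < of_int n \<and> of_int n \<le> X' + Y' - of_int k}.
           e (g (of_int n + of_int k) - g (of_int n))))"
  have eqT: "(\<Sum>k\<in>{1..int H - 1}. cmod (\<Sum>n\<in>{L<..U-k}. z (n+k) * cnj (z n))) = T"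
    unfolding T_def
  proof (rule sum.cong[OF refl])
    fix k assume k: "k \<in> {1..int H - 1}"
    have fl: "\<lfloor>X' + Y' - of_int k\<rfloor> = U - k" unfolding U_def by linarith
    have "(\<Sum>n\<in>{L<..U-k}. z (n+k) * cnj (z n)) = (\<Sum>n\<in>{n::int. X' < of_int n \<and> of_int n \<le> X' + Y' - of_int k}.
           e (g (of_int n + of_int k) - g (of_int n)))"
      unfolding int_set_floor fl L_def[symmetric]
      using k by (intro sum.cong refl) (auto simp: z_def e_mult_cnj)
    thus "cmod (\<Sum>n\<in>{L<..U-k}. z (n+k) * cnj (z n)) = cmod (\<Sum>n\<in>{n::int. X' < of_int n \<and> of_int n \<le> X' + Y' - of_int k}.
           e (g (of_int n + of_int k) - g (of_int n)))" by simp
  qed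
  have T0: "T \<ge> 0" unfolding T_def by (intro sum_nonneg) simp
  have N1: "real_of_int (U - L) \<le> Y' + 1" unfolding U_def L_def by linarith
  have N0: "real_of_int (U - L) \<ge> 0" using LU by simp
  have Hp: "real H \<ge> 1" using H1 by simp
  have "(cmod (\<Sum>n\<in>{L<..U}. z n))^2 \<le> (real_of_int (U - L) + real H - 1) / real H * (real_of_int (U - L) + 2 * T)"
    using V eqT by simp
  also have "\<dots> \<le> (2 * Y') / real H * (2 * Y' + 2 * T)"
    using N1 N0 Hp HY T0 by (intro mult_mono divide_right_mono) auto
  also have "\<dots> = 4 * Y'^2 / H + 4 * Y' / H * T" by (simp add: field_simps power2_eq_square add_divide_distrib)
  finally show ?thesis unfolding eqS T_def .
qed


lemma fdiff_cong: "(\<And>j. j \<in> {1..h} \<Longrightarrow> a j = b j) \<Longrightarrow> fdiff f a h x = fdiff f b h x"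
proof (induction h arbitrary: x)
  case 0 thus ?case by simp
next
  case (Suc h)
  have "fdiff f a h y = fdiff f b h y" for y using Suc by auto
  moreover have "a (Suc h) = b (Suc h)" using Suc by auto
  ultimately show ?case by simp
qed

definition Sk :: "(real \<Rightarrow> real) \<Rightarrow> real \<Rightarrow> real \<Rightarrow> nat \<Rightarrow> (nat \<Rightarrow> int) \<Rightarrow> complex" where
  "Sk f X Y k a = (\<Sum>n\<in>Iset X Y k a. e (fdiff f a k (of_int n)))"

definition box :: "(nat \<Rightarrow> nat) \<Rightarrow> nat \<Rightarrow> (nat \<Rightarrow> int) set" where
  "box H k = Pi\<^sub>E {1..k} (\<lambda>r. {1..int (H r) - 1})"

definition Ak :: "(real \<Rightarrow> real) \<Rightarrow> real \<Rightarrow> real \<Rightarrow> (nat \<Rightarrow> nat) \<Rightarrow> nat \<Rightarrow> real" where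
  "Ak f X Y H k = (1 / (Y * (\<Prod>r\<in>{1..k}. real (H r)))) * (\<Sum>a\<in>box H k. cmod (Sk f X Y k a))"

lemma Ak_nonneg: "Y > 0 \<Longrightarrow> Ak f X Y H k \<ge> 0"
  unfolding Ak_def by (intro mult_nonneg_nonneg sum_nonneg divide_nonneg_nonneg) (auto intro!: mult_nonneg_nonneg prod_nonneg)

lemma step:
  fixes X Y :: real and f :: "real \<Rightarrow> real" and d :: nat and H :: "nat \<Rightarrow> nat"
  assumes Y: "Y > 0"
    and H1: "\<And>r. r \<in> {1..d} \<Longrightarrow> H r \<ge> 1"
    and HY: "real (\<Sum>r\<in>{1..d}. H r) \<le> Y"
    and jd: "Suc j \<le> d"
  shows "(Ak f X Y H j)^2 \<le> 4 / H (Suc j) + 4 * Ak f X Y H (Suc j)"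
proof -
  define Q where "Q = box H j"
  define P where "P = (\<Prod>r\<in>{1..j}. real (H r))"
  define Hk where "Hk = H (Suc j)"
  define T where "T = (\<lambda>r. {1..int (H r) - 1})"
  have Hk1: "Hk \<ge> 1" unfolding Hk_def using H1 jd by simp
  have P1: "P \<ge> 1" unfolding P_def using H1 jd by (intro prod_ge_1) auto
  have finQ: "finite Q" unfolding Q_def box_def by (intro finite_PiE) auto
  have cardQ: "real (card Q) \<le> P"
  proof -
    have "card Q = (\<Prod>r\<in>{1..j}. card (T r))" unfolding Q_def box_def T_def by (rule card_PiE) simp
    hence "real (card Q) = (\<Prod>r\<in>{1..j}. real (card (T r)))" by simp
    also have "\<dots> \<le> P" unfolding P_def T_def
      by (intro prod_mono) auto
    finally show ?thesis .
  qed
  have sumH: "real (\<Sum>r\<in>{1..j}. H r) + real Hk \<le> Y"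
  proof -
    have "(\<Sum>r\<in>{1..j}. H r) + Hk = (\<Sum>r\<in>{1..Suc j}. H r)" unfolding Hk_def by simp
    also have "\<dots> \<le> (\<Sum>r\<in>{1..d}. H r)" using jd by (intro sum_mono2) auto
    finally show ?thesis using HY by linarith
  qed
  define D where "D = (\<Sum>a\<in>box H (Suc j). cmod (Sk f X Y (Suc j) a))"
  have bnd: "(cmod (Sk f X Y j a))^2 \<le> 4 * Y^2 / Hk + 4 * Y / Hk * (\<Sum>b\<in>T (Suc j). cmod (Sk f X Y (Suc j) (a(Suc j := b))))"
    if a: "a \<in> Q" for a
  proof -
    define Ya where "Ya = Y - of_int (\<Sum>i\<in>{1..j}. a i)"
    have a1: "a i \<ge> 1" "a i \<le> int (H i) - 1" if "i \<in> {1..j}" for i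
      using a that unfolding Q_def box_def by auto
    have "(\<Sum>i\<in>{1..j}. a i) \<le> (\<Sum>i\<in>{1..j}. int (H i))" using a1 by (intro sum_mono) force
    hence "of_int (\<Sum>i\<in>{1..j}. a i) \<le> real (\<Sum>r\<in>{1..j}. H r)"
      by (metis of_int_le_iff of_int_of_nat_eq of_nat_sum)
    hence HYa: "real Hk \<le> Ya" unfolding Ya_def using sumH by linarith
    have "(\<Sum>i\<in>{1..j}. a i) \<ge> 0" using a1 by (intro sum_nonneg) force
    hence "real_of_int (\<Sum>i\<in>{1..j}. a i) \<ge> 0" by (simp only: of_int_0_le_iff)
    hence YaY: "Ya \<le> Y" unfolding Ya_def by linarith
    have Ya0: "Ya \<ge> 0" using HYa by linarith
    note V = vdc_real[of Hk Ya "fdiff f a j" X, OF Hk1 HYa]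
    have eq1: "Sk f X Y j a = (\<Sum>n\<in>{n::int. X < of_int n \<and> of_int n \<le> X + Ya}. e (fdiff f a j (of_int n)))"
      unfolding Sk_def Iset_def Ya_def by (simp add: algebra_simps)
    have eq2: "cmod (\<Sum>n\<in>{n::int. X < of_int n \<and> of_int n \<le> X + Ya - of_int b}.
           e (fdiff f a j (of_int n + of_int b) - fdiff f a j (of_int n))) = cmod (Sk f X Y (Suc j) (a(Suc j := b)))"
      for b
    proof -
      have s: "(\<Sum>i\<in>{1..Suc j}. (a(Suc j := b)) i) = (\<Sum>i\<in>{1..j}. a i) + b"
        by simp
      have fd: "fdiff f (a(Suc j := b)) j y = fdiff f a j y" for y by (rule fdiff_cong) auto
      show ?thesis unfolding Sk_def Iset_def s
        by (simp add: fd Ya_def algebra_simps)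
    qed
    define R where "R = (\<Sum>b\<in>T (Suc j). cmod (Sk f X Y (Suc j) (a(Suc j := b))))"
    have R0: "R \<ge> 0" unfolding R_def by (intro sum_nonneg) simp
    have "(cmod (Sk f X Y j a))^2 \<le> 4 * Ya^2 / Hk + 4 * Ya / Hk * R"
      using V unfolding eq1 eq2 R_def T_def Hk_def by simp
    also have "\<dots> \<le> 4 * Y^2 / Hk + 4 * Y / Hk * R"
      using YaY Ya0 R0 Hk1 by (intro add_mono mult_right_mono divide_right_mono mult_left_mono power_mono) auto
    finally show ?thesis unfolding R_def .
  qed
  have dbl: "(\<Sum>a\<in>Q. \<Sum>b\<in>T (Suc j). cmod (Sk f X Y (Suc j) (a(Suc j := b)))) = D"
  proof -
    have bx: "box H (Suc j) = (\<lambda>(y, g). g(Suc j := y)) ` (T (Suc j) \<times> Q)"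
      unfolding box_def Q_def T_def
      by (simp add: atLeastAtMostSuc_conv PiE_insert_eq)
    have inj: "inj_on (\<lambda>(y, g). g(Suc j := y)) (T (Suc j) \<times> Q)"
      unfolding Q_def box_def T_def using inj_combinator[of "Suc j" "{1..j}" "\<lambda>r. {1..int (H r) - 1}"] by simp
    have "D = (\<Sum>p\<in>T (Suc j) \<times> Q. cmod (Sk f X Y (Suc j) ((\<lambda>(y, g). g(Suc j := y)) p)))"
      unfolding D_def bx by (rule sum.reindex[OF inj, unfolded comp_def])
    also have "\<dots> = (\<Sum>b\<in>T (Suc j). \<Sum>a\<in>Q. cmod (Sk f X Y (Suc j) (a(Suc j := b))))"
      by (subst sum.cartesian_product) (auto intro!: sum.cong simp: case_prod_beta)
    also have "\<dots> = (\<Sum>a\<in>Q. \<Sum>b\<in>T (Suc j). cmod (Sk f X Y (Suc j) (a(Suc j := b))))"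
      by (rule sum.swap)
    finally show ?thesis by simp
  qed
  have D0: "D \<ge> 0" unfolding D_def by (intro sum_nonneg) simp
  define SQ where "SQ = (\<Sum>a\<in>Q. cmod (Sk f X Y j a))"
  have "SQ^2 \<le> (\<Sum>a\<in>Q. (cmod (Sk f X Y j a))^2) * card Q"
    unfolding SQ_def by (rule sum_squared_le_sum_of_squares)
  also have "\<dots> \<le> (card Q * (4 * Y^2 / Hk) + 4 * Y / Hk * D) * card Q"
  proof (rule mult_right_mono)
    have "(\<Sum>a\<in>Q. (cmod (Sk f X Y j a))^2) \<le> (\<Sum>a\<in>Q. 4 * Y^2 / Hk + 4 * Y / Hk * (\<Sum>b\<in>T (Suc j). cmod (Sk f X Y (Suc j) (a(Suc j := b)))))"
      using bnd by (rule sum_mono)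
    also have "\<dots> = card Q * (4 * Y^2 / Hk) + 4 * Y / Hk * D"
      by (simp only: sum.distrib sum_distrib_left[symmetric] dbl) simp
    finally show "(\<Sum>a\<in>Q. (cmod (Sk f X Y j a))^2) \<le> card Q * (4 * Y^2 / Hk) + 4 * Y / Hk * D" .
  qed simp
  also have "\<dots> \<le> (P * (4 * Y^2 / Hk) + 4 * Y / Hk * D) * P"
    using cardQ Y Hk1 D0 P1
    by (intro mult_mono add_mono mult_right_mono) auto
  finally have main: "SQ^2 \<le> (P * (4 * Y^2 / Hk) + 4 * Y / Hk * D) * P" .
  have AkJ: "Ak f X Y H j = SQ / (Y * P)" unfolding Ak_def SQ_def P_def Q_def by simp
  have prodS: "(\<Prod>r\<in>{1..Suc j}. real (H r)) = P * Hk" unfolding P_def Hk_def by simp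
  have AkS: "Ak f X Y H (Suc j) = D / (Y * P * Hk)" unfolding Ak_def prodS D_def by (simp add: mult.assoc)
  have YP: "Y * P > 0" using Y P1 by simp
  have Hkp: "real Hk > 0" using Hk1 by simp
  have "(Ak f X Y H j)^2 = SQ^2 / (Y * P)^2" unfolding AkJ by (simp add: power_divide)
  also have "\<dots> \<le> (P * (4 * Y^2 / Hk) + 4 * Y / Hk * D) * P / (Y * P)^2"
    using main YP by (intro divide_right_mono) auto
  also have "\<dots> = 4 / Hk + 4 * (D / (Y * P * Hk))"
    using Y P1 Hkp by (simp add: field_simps power2_eq_square)
  finally show ?thesis unfolding AkS Hk_def .
qed


lemma powr_pow2: "(x::real) > 0 \<Longrightarrow> (x powr (c / 2 ^ k)) ^ (2 ^ k) = x powr c"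
  by (simp add: powr_power)

lemma B_facts: "Bconst > 0" "Bconst^2 = 4 + 4 * Bconst"
proof -
  have "sqrt 2 \<ge> 0" by simp
  thus "Bconst > 0" unfolding Bconst_def by linarith
  have s: "sqrt 2 * sqrt 2 = 2" by simp
  show "Bconst^2 = 4 + 4 * Bconst" unfolding Bconst_def power2_eq_square
    by (simp add: algebra_simps s)
qed

theorem theorem7:
  fixes X Y :: real and f :: "real \<Rightarrow> real" and d :: nat and H :: "nat \<Rightarrow> nat"
  assumes "Y > 0"
    and "d \<ge> 1"
    and "\<And>r. r \<in> {1..d} \<Longrightarrow> H r \<ge> 1"
    and "real (\<Sum>r\<in>{1..d}. H r) \<le> Y"
  shows "cmod ((1 / Y) * (\<Sum>n\<in>{n::int. X < of_int n \<and> of_int n \<le> X + Y}. e (f (of_int n))))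
           \<le> Bconst * Max ((\<lambda>r. real (H r) powr (- 1 / 2 ^ r)) ` {1..d}
                      \<union> {Bconst powr (- 1 / 2 ^ d) * Td f X Y d H powr (1 / 2 ^ d)})"
proof -
  note Y = assms(1) and d1 = assms(2) and H1 = assms(3) and HY = assms(4)
  define M where "M = Max ((\<lambda>r. real (H r) powr (- 1 / 2 ^ r)) ` {1..d}
                      \<union> {Bconst powr (- 1 / 2 ^ d) * Td f X Y d H powr (1 / 2 ^ d)})"
  define B where "B = Bconst"
  have B0: "B > 0" and B2: "B^2 = 4 + 4 * B" unfolding B_def using B_facts by auto
  have TdA: "Td f X Y d H = Ak f X Y H d"
    unfolding Td_def Ak_def Sk_def box_def by simp
  have Mge1: "M \<ge> real (H r) powr (- 1 / 2 ^ r)" if "r \<in> {1..d}" for r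
    unfolding M_def using that by (intro Max_ge) auto
  have Mge2: "M \<ge> B powr (- 1 / 2 ^ d) * Ak f X Y H d powr (1 / 2 ^ d)"
    unfolding M_def B_def TdA[symmetric] by (intro Max_ge) auto
  have M0: "M \<ge> 0"
    using Mge2 B0 by (smt (verit) mult_nonneg_nonneg powr_ge_zero)
  have A0: "Ak f X Y H k \<ge> 0" for k using Ak_nonneg[OF Y] .
  have base: "Ak f X Y H d \<le> B * M ^ (2 ^ d)"
  proof (cases "Ak f X Y H d = 0")
    case True thus ?thesis using B0 M0 by simp
  next
    case False
    hence Ap: "Ak f X Y H d > 0" using A0[of d] by simp
    have "(B powr (- 1 / 2 ^ d) * Ak f X Y H d powr (1 / 2 ^ d)) ^ (2 ^ d) \<le> M ^ (2 ^ d)"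
      using Mge2 by (intro power_mono) (auto intro!: mult_nonneg_nonneg)
    also have "(B powr (- 1 / 2 ^ d) * Ak f X Y H d powr (1 / 2 ^ d)) ^ (2 ^ d) = B powr (-1) * Ak f X Y H d"
    proof -
      have e1: "(B powr (- 1 / 2 ^ d)) ^ (2 ^ d) = B powr (-1)" by (rule powr_pow2[OF B0])
      have e2: "(Ak f X Y H d powr (1 / 2 ^ d)) ^ (2 ^ d) = Ak f X Y H d powr 1" by (rule powr_pow2[OF Ap])
      show ?thesis unfolding power_mult_distrib e1 e2 using Ap by simp
    qed
    finally have "B powr (-1) * Ak f X Y H d \<le> M ^ (2 ^ d)" .
    hence "Ak f X Y H d / B \<le> M ^ (2 ^ d)" using B0 by (simp add: powr_minus divide_inverse mult.commute)
    thus ?thesis using B0 by (simp add: divide_le_eq mult.commute)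
  qed
  have ind: "i \<le> d \<Longrightarrow> Ak f X Y H (d - i) \<le> B * M ^ (2 ^ (d - i))" for i
  proof (induction i)
    case 0 thus ?case using base by simp
  next
    case (Suc i)
    define j where "j = d - Suc i"
    have jd: "Suc j \<le> d" and jeq: "d - i = Suc j" using Suc.prems unfolding j_def by auto
    have IH: "Ak f X Y H (Suc j) \<le> B * M ^ (2 ^ Suc j)" using Suc jeq by simp
    have Hp: "real (H (Suc j)) > 0" using H1[of "Suc j"] jd by simp
    have "(real (H (Suc j)) powr (- 1 / 2 ^ Suc j)) ^ (2 ^ Suc j) \<le> M ^ (2 ^ Suc j)"
      using Mge1[of "Suc j"] jd by (intro power_mono) auto
    hence hm: "1 / real (H (Suc j)) \<le> M ^ (2 ^ Suc j)"
      using powr_pow2[OF Hp, of "-1" "Suc j"] by (simp add: powr_minus_divide)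
    have "(Ak f X Y H j)^2 \<le> 4 / H (Suc j) + 4 * Ak f X Y H (Suc j)"
      by (rule step[OF Y H1 HY jd])
    also have "\<dots> \<le> 4 * M ^ (2 ^ Suc j) + 4 * (B * M ^ (2 ^ Suc j))"
      using hm IH by (intro add_mono) auto
    also have "\<dots> = (B * M ^ (2 ^ j))^2"
    proof -
      have pw: "(M ^ (2 ^ j))^2 = M ^ (2 ^ Suc j)" by (simp only: power_mult[symmetric] power_Suc mult.commute)
      have "(B * M ^ (2 ^ j))^2 = B^2 * M ^ (2 ^ Suc j)" by (simp only: power_mult_distrib pw)
      also have "\<dots> = (4 + 4 * B) * M ^ (2 ^ Suc j)" by (simp only: B2)
      finally show ?thesis by (simp only: distrib_right mult.assoc)
    qed
    finally have "Ak f X Y H j \<le> B * M ^ (2 ^ j)"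
      by (rule power2_le_imp_le) (use B0 M0 in simp)
    thus ?case unfolding j_def .
  qed
  have "Ak f X Y H 0 \<le> B * M" using ind[of d] by simp
  moreover have "Ak f X Y H 0 = cmod ((1 / Y) * (\<Sum>n\<in>{n::int. X < of_int n \<and> of_int n \<le> X + Y}. e (f (of_int n))))"
    unfolding Ak_def Sk_def box_def Iset_def using Y by (simp add: norm_divide)
  ultimately show ?thesis unfolding M_def B_def by simp
qed

end
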